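(* Let $\Phi$ be an $N\times\mathcal{C}$ complex matrix ($\mathcal{C}\ge 2$) with no repeated columns which is $\eta$-StRIP-able for some $\eta\in(0,1]$, with columns $\varphi_1,\dots,\varphi_{\mathcal{C}}$. Let $1\le k\le\mathcal{C}$ and fix complex numbers $\alpha_1,\dots,\alpha_k$. Let $\pi=(\pi_1,\dots,\pi_{\mathcal{C}})$ be a uniformly random permutation of $\{1,\dots,\mathcal{C}\}$, let $\alpha\in\mathbb{C}^{\mathcal{C}}$ be the vector with entry $\alpha_j$ at position $\pi_j$ for $j=1,\dots,k$ and zero elsewhere, and let $f:=N^{-1/2}\Phi\alpha=N^{-1/2}\sum_{j=1}^k\alpha_j\varphi_{\pi_j}$. Then $$\left(1-\frac{k-1}{\mathcal{C}-1}\right)\|\alpha\|^2\leq\mathbb{E}_\pi\left[\|f\|^2\right]\leq\left(1+\frac{1}{\mathcal{C}-1}\right)\|\alpha\|^2,$$ where $\mathbb{E}_\pi$ denotes expectation over $\pi$ only.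
   Context: Columns of $\Phi$ have entries $\varphi_j(x)$, $x=1,\dots,N$. For $0<\eta\le 1$, $\Phi$ is called $\eta$-StRIP-able if: (St1) $\sum_{j=1}^{\mathcal{C}}\varphi_j(x)\overline{\varphi_j(y)}=0$ for $x\neq y$, and $\sum_{j=1}^{\mathcal{C}}\varphi_j(x)=0$ for all $x$; (St2) the columns form a group under pointwise multiplication, whose identity is the all-ones column $\varphi_1$; (St3) for all $j\in\{2,\dots,\mathcal{C}\}$, $\left|\sum_x\varphi_j(x)\right|^2\leq N^{2-\eta}$. $\|\cdot\|$ is the Euclidean norm. *)

theory Defs
  imports "HOL-Combinatorics.Permutations" Complex_Main
begin

text \<open>An N x C complex matrix is represented as Phi :: nat => nat => complex, with
  entry Phi x j = phi_j(x) for row x in {1..N} and column j in {1..C}.\<close>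

definition StRIP_able :: "nat \<Rightarrow> nat \<Rightarrow> (nat \<Rightarrow> nat \<Rightarrow> complex) \<Rightarrow> real \<Rightarrow> bool" where
  "StRIP_able N C Phi \<eta> \<longleftrightarrow>
     0 < \<eta> \<and> \<eta> \<le> 1 \<and>
     \<comment> \<open>St1\<close>
     (\<forall>x\<in>{1..N}. \<forall>y\<in>{1..N}. x \<noteq> y \<longrightarrow> (\<Sum>j=1..C. Phi x j * cnj (Phi y j)) = 0) \<and>
     (\<forall>x\<in>{1..N}. (\<Sum>j=1..C. Phi x j) = 0) \<and>
     \<comment> \<open>St2: columns form a group under pointwise multiplication with identity the all-ones column phi_1\<close>
     1 \<le> C \<and>
     (\<forall>x\<in>{1..N}. Phi x 1 = 1) \<and>
     (\<forall>i\<in>{1..C}. \<forall>j\<in>{1..C}. \<exists>l\<in>{1..C}. \<forall>x\<in>{1..N}. Phi x l = Phi x i * Phi x j) \<and>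
     (\<forall>i\<in>{1..C}. \<exists>l\<in>{1..C}. \<forall>x\<in>{1..N}. Phi x i * Phi x l = 1) \<and>
     \<comment> \<open>St3\<close>
     (\<forall>j\<in>{2..C}. (cmod (\<Sum>x=1..N. Phi x j))\<^sup>2 \<le> real N powr (2 - \<eta>))"

definition no_repeated_columns :: "nat \<Rightarrow> nat \<Rightarrow> (nat \<Rightarrow> nat \<Rightarrow> complex) \<Rightarrow> bool" where
  "no_repeated_columns N C Phi \<longleftrightarrow>
     (\<forall>i\<in>{1..C}. \<forall>j\<in>{1..C}. i \<noteq> j \<longrightarrow> (\<exists>x\<in>{1..N}. Phi x i \<noteq> Phi x j))"

definition alpha_vec :: "nat \<Rightarrow> (nat \<Rightarrow> complex) \<Rightarrow> (nat \<Rightarrow> nat) \<Rightarrow> nat \<Rightarrow> complex" where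
  "alpha_vec k a \<pi> i = (if \<exists>j\<in>{1..k}. \<pi> j = i then a (THE j. j \<in> {1..k} \<and> \<pi> j = i) else 0)"

definition f_vec :: "nat \<Rightarrow> nat \<Rightarrow> (nat \<Rightarrow> nat \<Rightarrow> complex) \<Rightarrow> nat \<Rightarrow> (nat \<Rightarrow> complex) \<Rightarrow> (nat \<Rightarrow> nat) \<Rightarrow> nat \<Rightarrow> complex" where
  "f_vec N C Phi k a \<pi> x = complex_of_real (1 / sqrt (real N)) * (\<Sum>i=1..C. Phi x i * alpha_vec k a \<pi> i)"

definition sqnorm :: "nat \<Rightarrow> (nat \<Rightarrow> complex) \<Rightarrow> real" where
  "sqnorm n v = (\<Sum>i=1..n. (cmod (v i))\<^sup>2)"

definition E_perm :: "nat \<Rightarrow> ((nat \<Rightarrow> nat) \<Rightarrow> real) \<Rightarrow> real" where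
  "E_perm C g = (\<Sum>\<pi>\<in>{\<pi>. \<pi> permutes {1..C}}. g \<pi>) / real (card {\<pi>. \<pi> permutes {1..C}})"

end

theory Submission
  imports Defs "HOL-Analysis.Convex"
begin

lemma perm_pair_invariant:
  fixes h :: "'a \<Rightarrow> 'a \<Rightarrow> complex"
  assumes "j \<in> A" "l \<in> A" "j \<noteq> l" "j' \<in> A" "l' \<in> A" "j' \<noteq> l'"
  shows "(\<Sum>\<pi>\<in>{\<pi>. \<pi> permutes A}. h (\<pi> j') (\<pi> l')) = (\<Sum>\<pi>\<in>{\<pi>. \<pi> permutes A}. h (\<pi> j) (\<pi> l))"
proof -
  define t where "t = transpose j j' l"
  define \<sigma> where "\<sigma> = transpose j j' \<circ> transpose l' t"
  have tA: "t \<in> A" using assms unfolding t_def by (auto simp: transpose_def)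
  have sp: "\<sigma> permutes A" unfolding \<sigma>_def
    using assms tA by (intro permutes_compose permutes_swap_id) auto
  have s1: "\<sigma> j' = j" using assms unfolding \<sigma>_def t_def by (auto simp: transpose_def)
  have s2: "\<sigma> l' = l" using assms unfolding \<sigma>_def t_def by (auto simp: transpose_def)
  show ?thesis
    using sum_permutations_compose_right[OF sp, of "\<lambda>\<pi>. h (\<pi> j') (\<pi> l')"] s1 s2 by simp
qed

lemma perm_pair_sum:
  fixes h :: "'a \<Rightarrow> 'a \<Rightarrow> complex"
  assumes fin: "finite A" and "j \<in> A" "l \<in> A" "j \<noteq> l"
  shows "of_nat (card {(i,m). i\<in>A \<and> m\<in>A \<and> i\<noteq>m}) * (\<Sum>\<pi>\<in>{\<pi>. \<pi> permutes A}. h (\<pi> j) (\<pi> l))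
     = of_nat (card {\<pi>. \<pi> permutes A}) * (\<Sum>(i,m)\<in>{(i,m). i\<in>A \<and> m\<in>A \<and> i\<noteq>m}. h i m)"
proof -
  define D where "D = {(i,m). i\<in>A \<and> m\<in>A \<and> i\<noteq>m}"
  define P where "P = {\<pi>. \<pi> permutes A}"
  have finD: "finite D" unfolding D_def
    by (rule finite_subset[of _ "A \<times> A"]) (use fin in auto)
  have finP: "finite P" unfolding P_def using fin by (simp add: finite_permutations)
  have "(\<Sum>(j',l')\<in>D. (\<Sum>\<pi>\<in>P. h (\<pi> j') (\<pi> l'))) = (\<Sum>(j',l')\<in>D. (\<Sum>\<pi>\<in>P. h (\<pi> j) (\<pi> l)))"
    unfolding P_def D_def
    by (rule sum.cong) (use assms perm_pair_invariant in auto)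
  also have "\<dots> = of_nat (card D) * (\<Sum>\<pi>\<in>P. h (\<pi> j) (\<pi> l))"
    by (simp add: case_prod_beta)
  finally have 1: "(\<Sum>(j',l')\<in>D. (\<Sum>\<pi>\<in>P. h (\<pi> j') (\<pi> l'))) = of_nat (card D) * (\<Sum>\<pi>\<in>P. h (\<pi> j) (\<pi> l))" .
  have "(\<Sum>(j',l')\<in>D. (\<Sum>\<pi>\<in>P. h (\<pi> j') (\<pi> l'))) = (\<Sum>\<pi>\<in>P. \<Sum>(j',l')\<in>D. h (\<pi> j') (\<pi> l'))"
    unfolding case_prod_beta by (rule sum.swap)
  also have "\<dots> = (\<Sum>\<pi>\<in>P. \<Sum>(i,m)\<in>D. h i m)"
  proof (rule sum.cong[OF refl])
    fix \<pi> assume "\<pi> \<in> P"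
    hence p: "\<pi> permutes A" unfolding P_def by simp
    have b: "bij_betw (\<lambda>(x,y). (\<pi> x, \<pi> y)) D D"
    proof (rule bij_betwI[where g="\<lambda>(x,y). (inv \<pi> x, inv \<pi> y)"])
      show "(\<lambda>(x,y). (\<pi> x, \<pi> y)) \<in> D \<rightarrow> D" unfolding D_def using p
        by (auto simp: permutes_in_image permutes_inj inj_eq)
      show "(\<lambda>(x,y). (inv \<pi> x, inv \<pi> y)) \<in> D \<rightarrow> D" unfolding D_def using permutes_inv[OF p]
        by (auto simp: permutes_in_image permutes_inj inj_eq)
      show "\<And>x. x \<in> D \<Longrightarrow> (case case x of (x, y) \<Rightarrow> (\<pi> x, \<pi> y) of (x, y) \<Rightarrow> (inv \<pi> x, inv \<pi> y)) = x"
        using p by (auto simp: permutes_inverses)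
      show "\<And>y. y \<in> D \<Longrightarrow> (case case y of (x, y) \<Rightarrow> (inv \<pi> x, inv \<pi> y) of (x, y) \<Rightarrow> (\<pi> x, \<pi> y)) = y"
        using p by (auto simp: permutes_inverses)
    qed
    show "(\<Sum>(j',l')\<in>D. h (\<pi> j') (\<pi> l')) = (\<Sum>(i,m)\<in>D. h i m)"
      using sum.reindex_bij_betw[OF b, of "\<lambda>(i,m). h i m"] by (simp add: case_prod_beta)
  qed
  also have "\<dots> = of_nat (card P) * (\<Sum>(i,m)\<in>D. h i m)" by simp
  finally show ?thesis using 1 unfolding D_def P_def by simp
qed

lemma card_offdiag:
  assumes "finite A"
  shows "card {(i,m). i\<in>A \<and> m\<in>A \<and> i\<noteq>m} = card A * card A - card A"
proof -
  have "{(i,m). i\<in>A \<and> m\<in>A \<and> i\<noteq>m} = A \<times> A - (\<lambda>x. (x,x)) ` A" by auto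
  moreover have "card ((\<lambda>x. (x,x)) ` A) = card A" by (rule card_image) (auto simp: inj_on_def)
  ultimately show ?thesis using assms
    by (simp add: card_Diff_subset card_cartesian_product finite_cartesian_product image_subset_iff)
qed

lemma col_unit:
  assumes st: "StRIP_able N C Phi \<eta>" and x: "x \<in> {1..N}" and i: "i \<in> {1..C}"
  shows "cmod (Phi x i) = 1"
proof -
  have C1: "1 \<le> C" using st unfolding StRIP_able_def by (elim conjE) assumption
  have G: "\<forall>i\<in>{1..C}. \<forall>j\<in>{1..C}. \<exists>l\<in>{1..C}. \<forall>x\<in>{1..N}. Phi x l = Phi x i * Phi x j"
    using st unfolding StRIP_able_def by (elim conjE) assumption
  have G2: "\<forall>i\<in>{1..C}. \<exists>l\<in>{1..C}. \<forall>x\<in>{1..N}. Phi x i * Phi x l = 1"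
    using st unfolding StRIP_able_def by (elim conjE) assumption
  have clos: "\<And>i j. i\<in>{1..C} \<Longrightarrow> j\<in>{1..C} \<Longrightarrow> \<exists>l\<in>{1..C}. Phi x l = Phi x i * Phi x j"
  proof -
    fix i j assume "i\<in>{1..C}" "j\<in>{1..C}"
    then obtain l where "l\<in>{1..C}" "\<forall>x\<in>{1..N}. Phi x l = Phi x i * Phi x j" using G by blast
    thus "\<exists>l\<in>{1..C}. Phi x l = Phi x i * Phi x j" using x by blast
  qed
  have inv: "\<And>i. i\<in>{1..C} \<Longrightarrow> \<exists>l\<in>{1..C}. Phi x i * Phi x l = 1"
  proof -
    fix i assume "i\<in>{1..C}"
    then obtain l where "l\<in>{1..C}" "\<forall>x\<in>{1..N}. Phi x i * Phi x l = 1" using G2 by blast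
    thus "\<exists>l\<in>{1..C}. Phi x i * Phi x l = 1" using x by blast
  qed
  define M where "M = Max ((\<lambda>i. cmod (Phi x i)) ` {1..C})"
  have fin: "finite ((\<lambda>i. cmod (Phi x i)) ` {1..C})" by simp
  have ne: "(\<lambda>i. cmod (Phi x i)) ` {1..C} \<noteq> {}" using C1 by auto
  have le: "\<And>i. i\<in>{1..C} \<Longrightarrow> cmod (Phi x i) \<le> M" unfolding M_def by (rule Max_ge[OF fin]) (rule imageI)
  obtain i0 where i0: "i0 \<in> {1..C}" "cmod (Phi x i0) = M"
    using Max_in[OF fin ne] unfolding M_def by auto
  obtain l where l: "l\<in>{1..C}" "Phi x l = Phi x i0 * Phi x i0" using clos[OF i0(1) i0(1)] by auto
  have "cmod (Phi x l) = M * M" using l(2) i0(2) by (simp add: norm_mult)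
  hence "M * M \<le> M" using le[OF l(1)] by simp
  moreover have "0 \<le> M" using norm_ge_zero[of "Phi x i0"] i0(2) by simp
  ultimately have M1: "M \<le> 1"
  proof -
    assume A: "M * M \<le> M" "0 \<le> M"
    show ?thesis
    proof (rule ccontr)
      assume "\<not> M \<le> 1"
      hence "M * 1 < M * M" by (intro mult_strict_left_mono) auto
      thus False using A by simp
    qed
  qed
  obtain l2 where l2: "l2\<in>{1..C}" "Phi x i * Phi x l2 = 1" using inv[OF i] by auto
  have a: "cmod (Phi x i) * cmod (Phi x l2) = 1" using arg_cong[OF l2(2), of cmod] by (simp add: norm_mult)
  have b: "cmod (Phi x l2) \<le> 1" using le[OF l2(1)] M1 by linarith
  have c: "cmod (Phi x i) \<le> 1" using le[OF i] M1 by linarith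
  have "cmod (Phi x i) * cmod (Phi x l2) \<le> cmod (Phi x i) * 1"
    using b by (intro mult_left_mono) auto
  hence "1 \<le> cmod (Phi x i)" using a by simp
  thus ?thesis using c by simp
qed

lemma alpha_at:
  assumes p: "\<pi> permutes {1..C}" and k: "k \<le> C" and j: "j \<in> {1..k}"
  shows "alpha_vec k a \<pi> (\<pi> j) = a j"
proof -
  have inj: "inj \<pi>" using permutes_inj[OF p] .
  have "(THE j'. j' \<in> {1..k} \<and> \<pi> j' = \<pi> j) = j"
  proof (rule the_equality)
    show "j \<in> {1..k} \<and> \<pi> j = \<pi> j" using j by simp
    fix j' assume "j' \<in> {1..k} \<and> \<pi> j' = \<pi> j"
    thus "j' = j" using inj by (simp add: inj_eq)
  qed
  moreover have "\<exists>j'\<in>{1..k}. \<pi> j' = \<pi> j" using j by blast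
  ultimately show ?thesis unfolding alpha_vec_def by simp
qed



lemma fvec_sum:
  assumes p: "\<pi> permutes {1..C}" and k: "k \<le> C"
  shows "(\<Sum>i=1..C. Phi x i * alpha_vec k a \<pi> i) = (\<Sum>j=1..k. a j * Phi x (\<pi> j))"
proof -
  have inj: "inj_on \<pi> {1..k}" by (rule inj_on_subset[OF permutes_inj[OF p] subset_UNIV])
  have sub: "\<pi> ` {1..k} \<subseteq> {1..C}"
  proof
    fix y assume "y \<in> \<pi> ` {1..k}"
    then obtain j where "j \<in> {1..k}" "y = \<pi> j" by blast
    moreover have "j \<in> {1..C}" using \<open>j \<in> {1..k}\<close> k by simp
    ultimately show "y \<in> {1..C}" using permutes_in_image[OF p] by simp
  qed
  have "(\<Sum>j=1..k. a j * Phi x (\<pi> j)) = (\<Sum>j=1..k. Phi x (\<pi> j) * alpha_vec k a \<pi> (\<pi> j))"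
  proof (rule sum.cong[OF refl])
    fix j assume "j \<in> {1..k}"
    thus "a j * Phi x (\<pi> j) = Phi x (\<pi> j) * alpha_vec k a \<pi> (\<pi> j)"
      using alpha_at[OF p k, of j a] by (simp add: mult.commute)
  qed
  also have "\<dots> = (\<Sum>i\<in>\<pi> ` {1..k}. Phi x i * alpha_vec k a \<pi> i)"
    using sum.reindex[OF inj, of "\<lambda>i. Phi x i * alpha_vec k a \<pi> i"] by simp
  also have "\<dots> = (\<Sum>i=1..C. Phi x i * alpha_vec k a \<pi> i)"
  proof (rule sum.mono_neutral_left)
    show "finite {1..C}" by simp
    show "\<pi> ` {1..k} \<subseteq> {1..C}" by (rule sub)
    show "\<forall>i\<in>{1..C} - \<pi> ` {1..k}. Phi x i * alpha_vec k a \<pi> i = 0"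
    proof
      fix i assume "i \<in> {1..C} - \<pi> ` {1..k}"
      hence "\<not> (\<exists>j\<in>{1..k}. \<pi> j = i)" by blast
      thus "Phi x i * alpha_vec k a \<pi> i = 0" unfolding alpha_vec_def by simp
    qed
  qed
  finally show ?thesis by simp
qed




lemma gall:
  assumes st: "StRIP_able N C Phi \<eta>"
  shows "(\<Sum>i=1..C. \<Sum>m=1..C. \<Sum>x=1..N. Phi x i * cnj (Phi x m)) = 0"
proof -
  have z: "\<forall>x\<in>{1..N}. (\<Sum>j=1..C. Phi x j) = 0"
    using st unfolding StRIP_able_def by (elim conjE) assumption
  have "(\<Sum>i=1..C. \<Sum>m=1..C. \<Sum>x=1..N. Phi x i * cnj (Phi x m))
      = (\<Sum>i=1..C. \<Sum>x=1..N. \<Sum>m=1..C. Phi x i * cnj (Phi x m))"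
    by (rule sum.cong[OF refl], rule sum.swap)
  also have "\<dots> = (\<Sum>x=1..N. \<Sum>i=1..C. \<Sum>m=1..C. Phi x i * cnj (Phi x m))"
    by (rule sum.swap)
  also have "\<dots> = (\<Sum>x=1..N. (\<Sum>i=1..C. Phi x i) * cnj (\<Sum>m=1..C. Phi x m))"
    by (simp add: sum_product)
  also have "\<dots> = 0"
    using z by simp
  finally show ?thesis .
qed

lemma gdiag:
  assumes st: "StRIP_able N C Phi \<eta>" and i: "i \<in> {1..C}"
  shows "(\<Sum>x=1..N. Phi x i * cnj (Phi x i)) = of_nat N"
proof -
  have "(\<Sum>x=1..N. Phi x i * cnj (Phi x i)) = (\<Sum>x=1..N. (1::complex))"
  proof (rule sum.cong[OF refl])
    fix x assume x: "x \<in> {1..N}"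
    have "Phi x i * cnj (Phi x i) = complex_of_real ((cmod (Phi x i))\<^sup>2)"
      by (rule complex_norm_square[symmetric])
    also have "\<dots> = 1" using col_unit[OF st x i] by simp
    finally show "Phi x i * cnj (Phi x i) = 1" .
  qed
  thus ?thesis by simp
qed

lemma offdiag_sum:
  assumes st: "StRIP_able N C Phi \<eta>"
  shows "(\<Sum>(i,m)\<in>{(i,m). i\<in>{1..C} \<and> m\<in>{1..C} \<and> i\<noteq>m}. (\<Sum>x=1..N. Phi x i * cnj (Phi x m)))
         = - (of_nat C * of_nat N)"
proof -
  define g where "g = (\<lambda>i m. \<Sum>x=1..N. Phi x i * cnj (Phi x m))"
  have gd: "g i i = of_nat N" if i: "i \<in> {1..C}" for i
  proof -
    have "g i i = (\<Sum>x=1..N. (1::complex))"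
    proof (unfold g_def, rule sum.cong[OF refl])
      fix x assume x: "x \<in> {1..N}"
      have "Phi x i * cnj (Phi x i) = complex_of_real ((cmod (Phi x i))\<^sup>2)"
        by (rule complex_norm_square[symmetric])
      also have "\<dots> = 1" using col_unit[OF st x i] by simp
      finally show "Phi x i * cnj (Phi x i) = 1" .
    qed
    thus ?thesis by simp
  qed
  have D: "{(i,m). i\<in>{1..C} \<and> m\<in>{1..C} \<and> i\<noteq>m} = (SIGMA i:{1..C}. {1..C} - {i})" by auto
  have "(\<Sum>(i,m)\<in>(SIGMA i:{1..C}. {1..C} - {i}). g i m) = (\<Sum>i=1..C. \<Sum>m\<in>{1..C} - {i}. g i m)"
    by (rule sum.Sigma[symmetric]) auto
  also have "\<dots> = (\<Sum>i=1..C. (\<Sum>m=1..C. g i m) - of_nat N)"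
  proof (rule sum.cong[OF refl])
    fix i assume i: "i \<in> {1..C}"
    show "(\<Sum>m\<in>{1..C} - {i}. g i m) = (\<Sum>m=1..C. g i m) - of_nat N"
      using sum_diff1[of "{1..C}" "g i" i] i gd[OF i] by simp
  qed
  also have "\<dots> = (\<Sum>i=1..C. \<Sum>m=1..C. g i m) - of_nat C * of_nat N"
    by (simp add: sum_subtractf)
  also have "\<dots> = - (of_nat C * of_nat N)"
    using gall[OF st] unfolding g_def by simp
  finally show ?thesis unfolding D g_def .
qed

lemma Q_expand:
  fixes k N :: nat and a :: "nat \<Rightarrow> complex" and \<pi> :: "nat \<Rightarrow> nat" and Phi :: "nat \<Rightarrow> nat \<Rightarrow> complex"
  shows
  "complex_of_real (\<Sum>x=1..N. (cmod (\<Sum>j=1..k. a j * Phi x (\<pi> j)))\<^sup>2)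
   = (\<Sum>j=1..k. \<Sum>l=1..k. a j * cnj (a l) * (\<Sum>x=1..N. Phi x (\<pi> j) * cnj (Phi x (\<pi> l))))"
proof -
  have "complex_of_real (\<Sum>x=1..N. (cmod (\<Sum>j=1..k. a j * Phi x (\<pi> j)))\<^sup>2)
      = (\<Sum>x=1..N. (\<Sum>j=1..k. a j * Phi x (\<pi> j)) * cnj (\<Sum>l=1..k. a l * Phi x (\<pi> l)))"
    by (simp only: of_real_sum complex_norm_square)
  also have "\<dots> = (\<Sum>x=1..N. \<Sum>j=1..k. \<Sum>l=1..k. a j * cnj (a l) * (Phi x (\<pi> j) * cnj (Phi x (\<pi> l))))"
    by (simp add: sum_product mult_ac)
  also have "\<dots> = (\<Sum>j=1..k. \<Sum>x=1..N. \<Sum>l=1..k. a j * cnj (a l) * (Phi x (\<pi> j) * cnj (Phi x (\<pi> l))))"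
    by (rule sum.swap)
  also have "\<dots> = (\<Sum>j=1..k. \<Sum>l=1..k. \<Sum>x=1..N. a j * cnj (a l) * (Phi x (\<pi> j) * cnj (Phi x (\<pi> l))))"
    by (rule sum.cong[OF refl], rule sum.swap)
  also have "\<dots> = (\<Sum>j=1..k. \<Sum>l=1..k. a j * cnj (a l) * (\<Sum>x=1..N. Phi x (\<pi> j) * cnj (Phi x (\<pi> l))))"
    by (simp add: sum_distrib_left)
  finally show ?thesis .
qed

lemma quad_form:
  fixes c :: real and k :: nat and a :: "nat \<Rightarrow> complex"
  shows "(\<Sum>j=1..k. \<Sum>l=1..k. a j * cnj (a l) * (if j = l then 1 else - complex_of_real c))
    = complex_of_real ((1 + c) * (\<Sum>j=1..k. (cmod (a j))\<^sup>2) - c * (cmod (\<Sum>j=1..k. a j))\<^sup>2)"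
proof -
  have "(\<Sum>j=1..k. \<Sum>l=1..k. a j * cnj (a l) * (if j = l then 1 else - complex_of_real c))
     = (\<Sum>j=1..k. \<Sum>l=1..k. (if j = l then (1 + complex_of_real c) * (a j * cnj (a l)) else 0)
            - complex_of_real c * (a j * cnj (a l)))"
    by (intro sum.cong refl) (auto simp: algebra_simps)
  also have "\<dots> = (\<Sum>j=1..k. (1 + complex_of_real c) * (a j * cnj (a j)))
          - complex_of_real c * (\<Sum>j=1..k. \<Sum>l=1..k. a j * cnj (a l))"
  proof -
    have 1: "(\<Sum>l=1..k. (if j = l then (1 + complex_of_real c) * (a j * cnj (a l)) else 0))
        = (1 + complex_of_real c) * (a j * cnj (a j))" if "j \<in> {1..k}" for j
      using sum.delta'[of "{1..k}" j "\<lambda>l. (1 + complex_of_real c) * (a j * cnj (a l))"] that by (simp del: sum.delta')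
    show ?thesis using 1 by (simp add: sum_subtractf sum_distrib_left)
  qed
  also have "(\<Sum>j=1..k. \<Sum>l=1..k. a j * cnj (a l)) = (\<Sum>j=1..k. a j) * cnj (\<Sum>j=1..k. a j)"
    by (simp add: sum_product)
  also have "\<dots> = complex_of_real ((cmod (\<Sum>j=1..k. a j))\<^sup>2)"
    by (rule complex_norm_square[symmetric])
  also have "(\<Sum>j=1..k. (1 + complex_of_real c) * (a j * cnj (a j)))
     = complex_of_real ((1 + c) * (\<Sum>j=1..k. (cmod (a j))\<^sup>2))"
    by (simp only: of_real_mult of_real_add of_real_1 of_real_sum complex_norm_square sum_distrib_left)
  finally show ?thesis by simp
qed

lemma sqnorm_eq:
  assumes N: "0 < N" and p: "\<pi> permutes {1..C}" and k: "k \<le> C"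
  shows "sqnorm N (f_vec N C Phi k a \<pi>) = (\<Sum>x=1..N. (cmod (\<Sum>j=1..k. a j * Phi x (\<pi> j)))\<^sup>2) / real N"
proof -
  have "sqnorm N (f_vec N C Phi k a \<pi>) = (\<Sum>x=1..N. (cmod (\<Sum>j=1..k. a j * Phi x (\<pi> j)))\<^sup>2 / real N)"
    unfolding sqnorm_def f_vec_def fvec_sum[OF p k]
  proof (rule sum.cong[OF refl])
    fix x
    have "(cmod (complex_of_real (1 / sqrt (real N)) * (\<Sum>j = 1..k. a j * Phi x (\<pi> j))))\<^sup>2
      = (1 / sqrt (real N))\<^sup>2 * (cmod (\<Sum>j = 1..k. a j * Phi x (\<pi> j)))\<^sup>2"
      unfolding norm_mult norm_of_real power_mult_distrib by simp
    also have "(1 / sqrt (real N))\<^sup>2 = 1 / real N" using N by (simp add: power_divide)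
    finally show "(cmod (complex_of_real (1 / sqrt (real N)) * (\<Sum>j = 1..k. a j * Phi x (\<pi> j))))\<^sup>2
      = (cmod (\<Sum>j = 1..k. a j * Phi x (\<pi> j)))\<^sup>2 / real N" by simp
  qed
  thus ?thesis by (simp add: sum_divide_distrib)
qed


theorem lemma3p2:
  fixes N C k :: nat and Phi :: "nat \<Rightarrow> nat \<Rightarrow> complex" and \<eta> :: real
    and a :: "nat \<Rightarrow> complex"
  assumes "C \<ge> 2"
    and "no_repeated_columns N C Phi"
    and "StRIP_able N C Phi \<eta>"
    and "1 \<le> k" and "k \<le> C"
  shows "(1 - (real k - 1) / (real C - 1)) * (\<Sum>j=1..k. (cmod (a j))\<^sup>2)
        \<le> E_perm C (\<lambda>\<pi>. sqnorm N (f_vec N C Phi k a \<pi>))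
    \<and> E_perm C (\<lambda>\<pi>. sqnorm N (f_vec N C Phi k a \<pi>))
        \<le> (1 + 1 / (real C - 1)) * (\<Sum>j=1..k. (cmod (a j))\<^sup>2)"
proof -
  note C2 = assms(1) and st = assms(3) and k = assms(5)
  define P where "P = {\<pi>. \<pi> permutes {1..C}}"
  define g where "g = (\<lambda>i m. \<Sum>x=1..N. Phi x i * cnj (Phi x m))"
  define Sa where "Sa = (\<Sum>j=1..k. (cmod (a j))\<^sup>2)"
  define s where "s = (\<Sum>j=1..k. a j)"
  define c :: real where "c = 1 / (real C - 1)"
  define Q where "Q = (\<lambda>\<pi>. \<Sum>x=1..N. (cmod (\<Sum>j=1..k. a j * Phi x (\<pi> j)))\<^sup>2)"
  define D where "D = {(i,m). i\<in>{1..C} \<and> m\<in>{1..C} \<and> i\<noteq>m}"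
  have finP: "finite P" unfolding P_def by (simp add: finite_permutations)
  have cP: "card P = fact C" unfolding P_def by (rule card_permutations) simp_all
  have H: "\<forall>i\<in>{1..C}. \<forall>j\<in>{1..C}. i \<noteq> j \<longrightarrow> (\<exists>x\<in>{1..N}. Phi x i \<noteq> Phi x j)"
    using assms(2) unfolding no_repeated_columns_def .
  have "(1::nat) \<noteq> 2 \<longrightarrow> (\<exists>x\<in>{1..N}. Phi x 1 \<noteq> Phi x 2)"
    by (rule bspec[OF bspec[OF H]]) (use C2 in simp)+
  then obtain x0 where "x0 \<in> {1..N}" by auto
  hence N0: "0 < N" by simp
  have C1: "real C - 1 > 0" using C2 by simp
  have key: "(\<Sum>\<pi>\<in>P. g (\<pi> j) (\<pi> l)) = of_nat (card P) * of_nat N * (if j = l then 1 else - complex_of_real c)"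
    if j: "j \<in> {1..k}" and l: "l \<in> {1..k}" for j l
  proof (cases "j = l")
    case True
    have "(\<Sum>\<pi>\<in>P. g (\<pi> j) (\<pi> j)) = (\<Sum>\<pi>\<in>P. of_nat N)"
    proof (rule sum.cong[OF refl])
      fix \<pi> assume "\<pi> \<in> P"
      hence p: "\<pi> permutes {1..C}" unfolding P_def by simp
      have "\<pi> j \<in> {1..C}" using j k permutes_in_image[OF p, of j] by simp
      hence "g (\<pi> j) (\<pi> j) = of_nat N"
        unfolding g_def by (rule gdiag[OF st])
      thus "g (\<pi> j) (\<pi> j) = of_nat N" .
    qed
    thus ?thesis using True by simp
  next
    case False
    have jA: "j \<in> {1..C}" and lA: "l \<in> {1..C}" using j l k by auto
    have "of_nat (card D) * (\<Sum>\<pi>\<in>P. g (\<pi> j) (\<pi> l)) = of_nat (card P) * (\<Sum>(i,m)\<in>D. g i m)"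
      unfolding D_def P_def by (rule perm_pair_sum[OF _ jA lA False]) simp
    also have "(\<Sum>(i,m)\<in>D. g i m) = - (of_nat C * of_nat N)"
      unfolding D_def g_def by (rule offdiag_sum[OF st])
    finally have e: "of_nat (card D) * (\<Sum>\<pi>\<in>P. g (\<pi> j) (\<pi> l)) = - (of_nat (card P) * (of_nat C * of_nat N))"
      by simp
    have cD: "card D = C * C - C" unfolding D_def using card_offdiag[of "{1..C::nat}"] by simp
    have "of_nat (card D) = (of_nat C * (of_nat C - 1) :: complex)"
      using C2 unfolding cD by (simp add: of_nat_diff algebra_simps)
    with e have e2: "of_nat C * (of_nat C - 1) * (\<Sum>\<pi>\<in>P. g (\<pi> j) (\<pi> l)) = - (of_nat (card P) * (of_nat C * of_nat N))"
      by simp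
    have nz1: "(of_nat C :: complex) \<noteq> 0" using C2 by simp
    have nz2: "(of_nat C - 1 :: complex) \<noteq> 0" using C2
      by (metis of_nat_1 of_nat_eq_iff right_minus_eq numeral_le_one_iff semiring_norm(69))
    have cc: "complex_of_real c = 1 / (of_nat C - 1)" unfolding c_def by simp
    define X where "X = (\<Sum>\<pi>\<in>P. g (\<pi> j) (\<pi> l))"
    have "of_nat C * ((of_nat C - 1) * X) = of_nat C * (- (of_nat (card P) * of_nat N))"
      using e2 unfolding X_def by (simp add: ac_simps)
    hence e3: "(of_nat C - 1) * X = - (of_nat (card P) * of_nat N)" using mult_left_cancel[OF nz1] by blast
    have "X = - (of_nat (card P) * of_nat N) / (of_nat C - 1)"
      by (rule eq_divide_imp[OF nz2]) (use e3 in \<open>simp add: mult.commute\<close>)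
    thus ?thesis using False unfolding cc X_def by simp
  qed
  define w where "w = (\<lambda>j l::nat. if j = l then 1 else - complex_of_real c)"
  have Qpi: "complex_of_real (Q \<pi>) = (\<Sum>j=1..k. \<Sum>l=1..k. a j * cnj (a l) * g (\<pi> j) (\<pi> l))" for \<pi>
    unfolding Q_def g_def by (rule Q_expand)
  have "complex_of_real (\<Sum>\<pi>\<in>P. Q \<pi>) = (\<Sum>\<pi>\<in>P. \<Sum>j=1..k. \<Sum>l=1..k. a j * cnj (a l) * g (\<pi> j) (\<pi> l))"
    by (simp only: of_real_sum Qpi)
  also have "\<dots> = (\<Sum>j=1..k. \<Sum>\<pi>\<in>P. \<Sum>l=1..k. a j * cnj (a l) * g (\<pi> j) (\<pi> l))"
    by (rule sum.swap)
  also have "\<dots> = (\<Sum>j=1..k. \<Sum>l=1..k. \<Sum>\<pi>\<in>P. a j * cnj (a l) * g (\<pi> j) (\<pi> l))"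
    by (rule sum.cong[OF refl], rule sum.swap)
  also have "\<dots> = (\<Sum>j=1..k. \<Sum>l=1..k. a j * cnj (a l) * (\<Sum>\<pi>\<in>P. g (\<pi> j) (\<pi> l)))"
    by (simp only: sum_distrib_left)
  also have "\<dots> = (\<Sum>j=1..k. \<Sum>l=1..k. (of_nat (card P) * of_nat N) * (a j * cnj (a l) * w j l))"
  proof (rule sum.cong[OF refl], rule sum.cong[OF refl])
    fix j l assume "j \<in> {1..k}" "l \<in> {1..k}"
    thus "a j * cnj (a l) * (\<Sum>\<pi>\<in>P. g (\<pi> j) (\<pi> l)) = (of_nat (card P) * of_nat N) * (a j * cnj (a l) * w j l)"
      using key[of j l] unfolding w_def by (simp only: mult_ac)
  qed
  also have "\<dots> = (of_nat (card P) * of_nat N) * (\<Sum>j=1..k. \<Sum>l=1..k. a j * cnj (a l) * w j l)"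
    by (simp only: sum_distrib_left)
  also have "(\<Sum>j=1..k. \<Sum>l=1..k. a j * cnj (a l) * w j l) = complex_of_real ((1 + c) * Sa - c * (cmod s)\<^sup>2)"
    unfolding w_def Sa_def s_def by (rule quad_form)
  finally have "complex_of_real (\<Sum>\<pi>\<in>P. Q \<pi>) = complex_of_real (real (card P) * real N * ((1 + c) * Sa - c * (cmod s)\<^sup>2))"
    by simp
  hence sQ: "(\<Sum>\<pi>\<in>P. Q \<pi>) = real (card P) * real N * ((1 + c) * Sa - c * (cmod s)\<^sup>2)"
    by (simp only: of_real_eq_iff)
  have cP0: "real (card P) > 0" unfolding cP by simp
  have E: "E_perm C (\<lambda>\<pi>. sqnorm N (f_vec N C Phi k a \<pi>)) = (1 + c) * Sa - c * (cmod s)\<^sup>2"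
  proof -
    have "E_perm C (\<lambda>\<pi>. sqnorm N (f_vec N C Phi k a \<pi>)) = (\<Sum>\<pi>\<in>P. Q \<pi> / real N) / real (card P)"
      unfolding E_perm_def P_def[symmetric]
      by (rule arg_cong[where f="\<lambda>t. t / real (card P)"], rule sum.cong[OF refl])
         (simp add: P_def Q_def sqnorm_eq[OF N0 _ k])
    also have "\<dots> = (\<Sum>\<pi>\<in>P. Q \<pi>) / real N / real (card P)"
      by (simp add: sum_divide_distrib)
    also have "\<dots> = (1 + c) * Sa - c * (cmod s)\<^sup>2"
      unfolding sQ using N0 cP0 by simp
    finally show ?thesis .
  qed
  have c0: "0 \<le> c" unfolding c_def using C1 by simp
  have cs: "(cmod s)\<^sup>2 \<le> real k * Sa"
  proof -
    have "cmod s \<le> (\<Sum>j=1..k. cmod (a j))" unfolding s_def by (rule norm_sum)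
    hence "(cmod s)\<^sup>2 \<le> (\<Sum>j=1..k. cmod (a j))\<^sup>2" by (rule power_mono) simp
    also have "\<dots> \<le> (\<Sum>j=1..k. (cmod (a j))\<^sup>2) * card {1..k}"
      by (rule sum_squared_le_sum_of_squares)
    finally show ?thesis unfolding Sa_def by (simp add: mult.commute)
  qed
  have up: "(1 + c) * Sa - c * (cmod s)\<^sup>2 \<le> (1 + c) * Sa"
    using c0 by simp
  have "c * (cmod s)\<^sup>2 \<le> c * (real k * Sa)" using cs c0 by (rule mult_left_mono)
  hence lo: "(1 - (real k - 1) * c) * Sa \<le> (1 + c) * Sa - c * (cmod s)\<^sup>2"
    by (simp add: algebra_simps)
  have "(real k - 1) / (real C - 1) = (real k - 1) * c" unfolding c_def by simp
  moreover have "1 / (real C - 1) = c" unfolding c_def ..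
  ultimately show ?thesis using E up lo unfolding Sa_def by simp
qed

end
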